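(* Let $X$ be a Banach space and assume there exists a set $\mathcal A$ of finite-rank bounded linear operators $X\to X$ such that $\sup\{\|\mathrm{Id}-T\|:T\in\mathcal A\}<2$ and such that for every $\varepsilon>0$ and every $x\in X$ there is $T\in\mathcal A$ with $\|x-Tx\|<\varepsilon$. Then $X$ contains no super $\Delta$-point. In particular, this holds if $X$ admits a finite dimensional decomposition whose suppression-unconditional constant is strictly less than $2$ (e.g. an unconditional basis with suppression-unconditional constant less than $2$).
   Context: $X$ is a real or complex Banach space. $x\in S_X$ is a super $\Delta$-point if $\sup_{y\in V}\|x-y\|=2$ for every relatively weakly open subset $V$ of $B_X$ containing $x$. A sequence $(E_n)$ of finite-dimensional subspaces is an FDD of $X$ if every $x\in X$ has a unique representation $x=\sum_nx_n$ with $x_n\in E_n$; it is unconditional if these series converge unconditionally, and its suppression-unconditional constant is $\sup_{A\subseteq\mathbb N}\|P_A\|$ where $P_A(x)=\sum_{n\in A}x_n$. *)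

theory Defs
  imports "HOL-Analysis.Analysis"
begin

definition weak_topology :: "'a::real_normed_vector topology" where
  "weak_topology = topology_generated_by
     {f -` U | (f :: 'a \<Rightarrow> real) U. bounded_linear f \<and> open U}"

definition super_delta_point :: "'a::real_normed_vector \<Rightarrow> bool" where
  "super_delta_point x \<longleftrightarrow> x \<in> sphere 0 1 \<and>
     (\<forall>V. openin (subtopology weak_topology (cball 0 1)) V \<and> x \<in> V
          \<longrightarrow> (SUP y\<in>V. norm (x - y)) = 2)"

definition finite_rank_op :: "('a::real_normed_vector \<Rightarrow> 'a) \<Rightarrow> bool" where
  "finite_rank_op T \<longleftrightarrow> bounded_linear T \<and> (\<exists>B. finite B \<and> range T \<subseteq> span B)"

definition is_FDD :: "(nat \<Rightarrow> 'a::real_normed_vector set) \<Rightarrow> bool" where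
  "is_FDD E \<longleftrightarrow> (\<forall>n. subspace (E n) \<and> (\<exists>B. finite B \<and> E n \<subseteq> span B)) \<and>
     (\<forall>x. \<exists>!c. (\<forall>n. c n \<in> E n) \<and> c sums x)"

definition FDD_coef :: "(nat \<Rightarrow> 'a::real_normed_vector set) \<Rightarrow> 'a \<Rightarrow> nat \<Rightarrow> 'a" where
  "FDD_coef E x = (THE c. (\<forall>n. c n \<in> E n) \<and> c sums x)"

definition unconditional_FDD :: "(nat \<Rightarrow> 'a::real_normed_vector set) \<Rightarrow> bool" where
  "unconditional_FDD E \<longleftrightarrow> is_FDD E \<and> (\<forall>x. (FDD_coef E x has_sum x) UNIV)"

definition FDD_proj :: "(nat \<Rightarrow> 'a::real_normed_vector set) \<Rightarrow> nat set \<Rightarrow> 'a \<Rightarrow> 'a" where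
  "FDD_proj E A x = infsum (FDD_coef E x) A"

end

theory Submission
  imports Defs
begin

lemma coef_bound:
  fixes C :: "'a::real_normed_vector set"
  assumes "finite C" "independent C"
  shows "\<exists>M>0. \<forall>u. \<forall>b\<in>C. \<bar>u b\<bar> \<le> M * norm (\<Sum>c\<in>C. u c *\<^sub>R c)"
  using assms
proof (induction C rule: finite_induct)
  case empty show ?case by (auto intro: exI[of _ 1])
next
  case (insert a C)
  have indC: "independent C" and na: "a \<notin> span C"
    using insert.prems insert.hyps by (auto simp: independent_insert)
  obtain M where M0: "M > 0" and M: "\<And>u b. b\<in>C \<Longrightarrow> \<bar>u b\<bar> \<le> M * norm (\<Sum>c\<in>C. u c *\<^sub>R c)"
    using insert.IH indC by blast
  have cl: "closed (span C)"
    unfolding closed_sequential_limits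
  proof (intro allI impI, elim conjE)
    fix x l assume xs: "\<forall>n. x n \<in> span C" and xl: "x \<longlonglongrightarrow> l"
    have "\<forall>n. \<exists>v. x n = (\<Sum>c\<in>C. v c *\<^sub>R c)"
      using xs span_finite[OF insert.hyps(1)] by blast
    then obtain u where u: "\<And>n. x n = (\<Sum>c\<in>C. u n c *\<^sub>R c)" by metis
    have diff: "\<bar>u n c - u m c\<bar> \<le> M * dist (x n) (x m)" if "c \<in> C" for n m c
    proof -
      have "x n - x m = (\<Sum>c\<in>C. (u n c - u m c) *\<^sub>R c)"
        by (simp add: u sum_subtractf scaleR_diff_left)
      then show ?thesis using M[OF that, of "\<lambda>c. u n c - u m c"] by (simp add: dist_norm)
    qed
    have "Cauchy x" using xl by (rule LIMSEQ_imp_Cauchy)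
    have cu: "convergent (\<lambda>n. u n c)" if "c \<in> C" for c
    proof -
      have "Cauchy (\<lambda>n. u n c)"
        unfolding Cauchy_def
      proof (intro allI impI)
        fix e :: real assume "e > 0"
        then have "e / M > 0" using M0 by simp
        then obtain N where N: "\<forall>m\<ge>N. \<forall>n\<ge>N. dist (x m) (x n) < e / M"
          using \<open>Cauchy x\<close> unfolding Cauchy_def by blast
        show "\<exists>N. \<forall>m\<ge>N. \<forall>n\<ge>N. dist (u m c) (u n c) < e"
        proof (intro exI allI impI)
          fix m n assume "m \<ge> N" "n \<ge> N"
          then have "M * dist (x m) (x n) < e" using N M0 by (simp add: pos_less_divide_eq mult.commute)
          then show "dist (u m c) (u n c) < e" using diff[OF that, of m n] by (simp add: dist_real_def)
        qed
      qed
      then show ?thesis by (simp add: Cauchy_convergent_iff)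
    qed
    define lc where "lc c = lim (\<lambda>n. u n c)" for c
    have "(\<lambda>n. \<Sum>c\<in>C. u n c *\<^sub>R c) \<longlonglongrightarrow> (\<Sum>c\<in>C. lc c *\<^sub>R c)"
      by (intro tendsto_sum tendsto_scaleR tendsto_const)
         (use cu in \<open>auto simp: lc_def convergent_LIMSEQ_iff\<close>)
    moreover have "x = (\<lambda>n. \<Sum>c\<in>C. u n c *\<^sub>R c)" using u by (intro ext) auto
    ultimately have "x \<longlonglongrightarrow> (\<Sum>c\<in>C. lc c *\<^sub>R c)" by simp
    then have "l = (\<Sum>c\<in>C. lc c *\<^sub>R c)" using xl LIMSEQ_unique by blast
    then show "l \<in> span C" using span_finite[OF insert.hyps(1)] by blast
  qed
  define d where "d = infdist a (span C)"
  have "d \<noteq> 0" using in_closed_iff_infdist_zero[OF cl, of a] na span_zero[of C] d_def by (metis empty_iff)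
  then have d0: "d > 0" using infdist_nonneg[of a "span C"] d_def by linarith
  define M' where "M' = max (1/d) (M * (1 + norm a / d))"
  show ?case
  proof (intro exI[of _ M'] conjI allI ballI)
    show "M' > 0" using d0 by (simp add: M'_def less_max_iff_disj)
    fix u :: "'a \<Rightarrow> real" and b assume b: "b \<in> insert a C"
    define t where "t = u a"
    define w where "w = (\<Sum>c\<in>C. u c *\<^sub>R c)"
    have v: "(\<Sum>c\<in>insert a C. u c *\<^sub>R c) = t *\<^sub>R a + w"
      using insert.hyps by (simp add: t_def w_def)
    define v where "v = t *\<^sub>R a + w"
    have wC: "w \<in> span C" unfolding w_def by (auto intro: span_sum span_scale span_base)
    have c1: "\<bar>t\<bar> * d \<le> norm v"
    proof (cases "t = 0")
      case True then show ?thesis by simp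
    next
      case False
      have "d \<le> dist a (- (1/t) *\<^sub>R w)"
        unfolding d_def by (rule infdist_le) (use wC in \<open>auto intro: span_scale span_neg\<close>)
      also have "\<dots> = norm (a + (1/t) *\<^sub>R w)" by (simp add: dist_norm)
      also have "\<dots> = norm ((1/t) *\<^sub>R v)" using False
        by (simp add: v_def scaleR_add_right)
      also have "\<dots> = norm v / \<bar>t\<bar>" by simp
      finally show ?thesis using False by (simp add: pos_le_divide_eq mult.commute)
    qed
    have c2: "norm w \<le> norm v + \<bar>t\<bar> * norm a"
    proof -
      have "w = v - t *\<^sub>R a" by (simp add: v_def)
      then have "norm w \<le> norm v + norm (t *\<^sub>R a)" by (metis norm_triangle_ineq4)
      then show ?thesis by simp
    qed
    have ta: "\<bar>t\<bar> \<le> norm v / d" using c1 d0 by (simp add: pos_le_divide_eq)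
    show "\<bar>u b\<bar> \<le> M' * norm (\<Sum>c\<in>insert a C. u c *\<^sub>R c)"
    proof (cases "b = a")
      case True
      have "\<bar>u b\<bar> \<le> (1/d) * norm v" using ta True t_def by simp
      also have "\<dots> \<le> M' * norm v" by (intro mult_right_mono) (auto simp: M'_def)
      finally show ?thesis by (simp add: v v_def)
    next
      case False
      then have bC: "b \<in> C" using b by simp
      have "\<bar>u b\<bar> \<le> M * norm w" using M[OF bC, of u] w_def by simp
      also have "\<dots> \<le> M * (norm v + norm v / d * norm a)"
      proof -
        have "\<bar>t\<bar> * norm a \<le> norm v / d * norm a" using ta by (intro mult_right_mono) auto
        then show ?thesis using c2 M0 by (intro mult_left_mono) auto
      qed
      also have "\<dots> = (M * (1 + norm a / d)) * norm v" by (simp add: algebra_simps)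
      also have "\<dots> \<le> M' * norm v" by (intro mult_right_mono) (auto simp: M'_def)
      finally show ?thesis by (simp add: v v_def)
    qed
  qed
qed


lemma weak_topspace: "topspace (weak_topology :: 'a::real_normed_vector topology) = UNIV"
proof -
  have "(\<lambda>_::'a. 0::real) -` UNIV \<in> {f -` U | (f :: 'a \<Rightarrow> real) U. bounded_linear f \<and> open U}"
    by (intro CollectI exI[of _ "\<lambda>_. 0"] exI[of _ UNIV]) (auto intro: bounded_linear_zero)
  then show ?thesis unfolding weak_topology_def topology_generated_by_topspace by auto
qed

lemma weak_open_basic:
  assumes "bounded_linear (f :: 'a::real_normed_vector \<Rightarrow> real)" "open U"
  shows "openin weak_topology (f -` U)"
  unfolding weak_topology_def by (rule topology_generated_by_Basis) (use assms in blast)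

lemma finite_rank_weak_nbhd:
  fixes T :: "'a::real_normed_vector \<Rightarrow> 'a"
  assumes "finite_rank_op T" "e > 0"
  shows "\<exists>W. openin weak_topology W \<and> x \<in> W \<and> (\<forall>y\<in>W. norm (T y - T x) < e)"
proof -
  obtain B where bl: "bounded_linear T" and fB: "finite B" and rT: "range T \<subseteq> span B"
    using assms(1) unfolding finite_rank_op_def by blast
  obtain C where CB: "C \<subseteq> B" and iC: "independent C" and BC: "B \<subseteq> span C"
    using maximal_independent_subset[of B] by blast
  have fC: "finite C" using CB fB finite_subset by blast
  have Tspan: "T y \<in> span C" for y
    using rT BC span_mono span_span by (metis range_subsetD subset_iff)
  obtain M where M0: "M > 0" and M: "\<And>u b. b\<in>C \<Longrightarrow> \<bar>u b\<bar> \<le> M * norm (\<Sum>c\<in>C. u c *\<^sub>R c)"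
    using coef_bound[OF fC iC] by blast
  obtain K where K: "\<And>x. norm (T x) \<le> norm x * K"
    using bl bounded_linear.bounded by blast
  define g where "g c y = representation C (T y) c" for c y
  have Tsum: "T y = (\<Sum>c\<in>C. g c y *\<^sub>R c)" for y
    unfolding g_def using sum_representation_eq[OF iC Tspan fC order_refl] by simp
  have gbl: "bounded_linear (g c)" if "c \<in> C" for c
  proof (rule bounded_linear_intro[where K = "M * K"])
    show "g c (x + y) = g c x + g c y" for x y
      unfolding g_def using linear_add[OF bounded_linear.linear[OF bl]] representation_add[OF iC Tspan Tspan] by simp
    show "g c (r *\<^sub>R x) = r *\<^sub>R g c x" for r x
      unfolding g_def using linear_scale[OF bounded_linear.linear[OF bl]] representation_scale[OF iC Tspan] by simp
    show "norm (g c x) \<le> norm x * (M * K)" for x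
    proof -
      have "\<bar>g c x\<bar> \<le> M * norm (T x)" using M[OF that, of "\<lambda>c. g c x"] Tsum[of x] by simp
      also have "\<dots> \<le> M * (norm x * K)" using K M0 by (intro mult_left_mono) auto
      finally show ?thesis by (simp add: algebra_simps)
    qed
  qed
  define S where "S = (\<Sum>c\<in>C. norm c)"
  have S0: "S \<ge> 0" unfolding S_def by (intro sum_nonneg) auto
  define \<delta> where "\<delta> = e / (S + 1)"
  have d0: "\<delta> > 0" using S0 assms(2) by (simp add: \<delta>_def)
  define W where "W = \<Inter> (insert UNIV ((\<lambda>c. g c -` ball (g c x) \<delta>) ` C))"
  have "openin weak_topology W"
    unfolding W_def
    by (intro openin_Inter) (auto simp: fC intro!: weak_open_basic gbl simp flip: weak_topspace)
  moreover have "x \<in> W" using d0 by (auto simp: W_def)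
  moreover have "norm (T y - T x) < e" if y: "y \<in> W" for y
  proof -
    have yc: "\<bar>g c y - g c x\<bar> < \<delta>" if "c \<in> C" for c
      using y that by (auto simp: W_def dist_real_def abs_minus_commute)
    have "T y - T x = (\<Sum>c\<in>C. (g c y - g c x) *\<^sub>R c)"
      by (simp add: Tsum[of y] Tsum[of x] sum_subtractf scaleR_diff_left)
    then have "norm (T y - T x) \<le> (\<Sum>c\<in>C. norm ((g c y - g c x) *\<^sub>R c))"
      by (metis norm_sum)
    also have "\<dots> \<le> (\<Sum>c\<in>C. \<delta> * norm c)"
      using yc by (intro sum_mono) (simp add: mult_right_mono less_imp_le)
    also have "\<dots> = \<delta> * S" by (simp add: S_def sum_distrib_left)
    also have "\<dots> < e" using S0 assms(2) by (simp add: \<delta>_def field_simps)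
    finally show ?thesis .
  qed
  ultimately show ?thesis by blast
qed


lemma part1:
  fixes A :: "('a::real_normed_vector \<Rightarrow> 'a) set" and x :: 'a
  assumes fr: "\<forall>T\<in>A. finite_rank_op T" and K2: "K < 2"
    and KA: "\<forall>T\<in>A. onorm (\<lambda>x. x - T x) \<le> K"
    and ap: "\<forall>\<epsilon>>0. \<forall>x. \<exists>T\<in>A. norm (x - T x) < \<epsilon>"
  shows "\<not> super_delta_point x"
proof
  assume sd: "super_delta_point x"
  define \<epsilon> where "\<epsilon> = (2 - K) / 4"
  have e0: "\<epsilon> > 0" using K2 by (simp add: \<epsilon>_def)
  obtain T where TA: "T \<in> A" and Tx: "norm (x - T x) < \<epsilon>" using ap e0 by blast
  have frT: "finite_rank_op T" using fr TA by blast
  then have bl: "bounded_linear T" by (simp add: finite_rank_op_def)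
  have bl2: "bounded_linear (\<lambda>x. x - T x)" by (intro bounded_linear_sub bounded_linear_ident bl)
  have onK: "onorm (\<lambda>x. x - T x) \<le> K" using KA TA by blast
  have K0: "K \<ge> 0" using onorm_pos_le[OF bl2] onK by linarith
  obtain W where W: "openin weak_topology W" "x \<in> W" "\<And>y. y \<in> W \<Longrightarrow> norm (T y - T x) < \<epsilon>"
    using finite_rank_weak_nbhd[OF frT e0, of x] by blast
  define V where "V = W \<inter> cball 0 1"
  have xV: "x \<in> V" using sd W(2) by (auto simp: V_def super_delta_point_def)
  have "openin (subtopology weak_topology (cball 0 1)) V"
    unfolding V_def by (rule openin_subtopology_Int) (rule W(1))
  then have sup2: "(SUP y\<in>V. norm (x - y)) = 2" using sd xV by (auto simp: super_delta_point_def)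
  have bnd: "norm (x - y) \<le> 2 * \<epsilon> + K" if y: "y \<in> V" for y
  proof -
    have ny: "norm y \<le> 1" using y by (auto simp: V_def)
    have "norm (y - T y) \<le> onorm (\<lambda>x. x - T x) * norm y" using onorm[OF bl2, of y] by simp
    also have "\<dots> \<le> K * norm y" using onK by (intro mult_right_mono) auto
    also have "\<dots> \<le> K" using K0 ny by (simp add: mult_left_le)
    finally have a: "norm (y - T y) \<le> K" .
    have b: "norm (T x - T y) < \<epsilon>" using W(3)[of y] y by (simp add: V_def norm_minus_commute)
    have "x - y = (x - T x) + (T x - T y) + (T y - y)" by simp
    then have "norm (x - y) \<le> norm (x - T x) + norm (T x - T y) + norm (T y - y)"
      by (metis norm_triangle_ineq order_trans add_right_mono)
    then show ?thesis using a b Tx by (simp add: norm_minus_commute)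
  qed
  have "(SUP y\<in>V. norm (x - y)) \<le> 2 * \<epsilon> + K"
    using xV bnd by (intro cSUP_least) auto
  then show False using sup2 K2 by (simp add: \<epsilon>_def field_simps)
qed


lemma part2:
  fixes E :: "nat \<Rightarrow> 'a::banach set" and x :: 'a
  assumes U: "unconditional_FDD E" and K2: "K < 2"
    and KP: "\<forall>A x. norm (FDD_proj E A x) \<le> K * norm x"
  shows "\<not> super_delta_point x"
proof -
  have F: "is_FDD E" and hs: "\<And>x. (FDD_coef E x has_sum x) UNIV"
    using U by (auto simp: unconditional_FDD_def)
  have ex1: "\<exists>!c. (\<forall>n. c n \<in> E n) \<and> c sums x" for x using F by (simp add: is_FDD_def)
  have sub: "subspace (E n)" for n using F by (simp add: is_FDD_def)
  have cP: "(\<forall>n. FDD_coef E x n \<in> E n) \<and> FDD_coef E x sums x" for x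
    unfolding FDD_coef_def by (rule theI'[OF ex1])
  have uniq: "FDD_coef E x = c" if "\<forall>n. c n \<in> E n" "c sums x" for x c
    unfolding FDD_coef_def by (rule the1_equality[OF ex1]) (use that in blast)
  have cadd: "FDD_coef E (x + y) = (\<lambda>n. FDD_coef E x n + FDD_coef E y n)" for x y
    by (rule uniq) (use cP sub in \<open>auto intro: subspace_add sums_add\<close>)
  have cscale: "FDD_coef E (r *\<^sub>R x) = (\<lambda>n. r *\<^sub>R FDD_coef E x n)" for r x
    by (rule uniq) (use cP sub in \<open>auto intro: subspace_scale sums_scaleR_right\<close>)
  obtain Bf where Bf: "\<And>n. finite (Bf n) \<and> E n \<subseteq> span (Bf n)"
    using F unfolding is_FDD_def by metis
  define K' where "K' = max K 0"
  have K'2: "K' < 2" and K'0: "K' \<ge> 0" using K2 by (auto simp: K'_def)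
  have KP': "norm (FDD_proj E A x) \<le> K' * norm x" for A x
    using KP[rule_format, of A x] by (smt (verit) K'_def mult_right_mono norm_ge_zero max.cobounded1)
  define T where "T n x = FDD_proj E {..n} x" for n x
  have Tsum: "T n x = (\<Sum>k\<le>n. FDD_coef E x k)" for n x by (simp add: T_def FDD_proj_def)
  have Tbl: "bounded_linear (T n)" for n
  proof (rule bounded_linear_intro[where K = K'])
    show "T n (x + y) = T n x + T n y" for x y by (simp add: Tsum cadd sum.distrib)
    show "T n (r *\<^sub>R x) = r *\<^sub>R T n x" for r x by (simp add: Tsum cscale scaleR_sum_right)
    show "norm (T n x) \<le> norm x * K'" for x using KP'[of "{..n}" x] by (simp add: T_def mult.commute)
  qed
  have Tfr: "finite_rank_op (T n)" for n
    unfolding finite_rank_op_def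
  proof (intro conjI Tbl exI[of _ "\<Union>k\<le>n. Bf k"])
    show "finite (\<Union>k\<le>n. Bf k)" using Bf by auto
    show "range (T n) \<subseteq> span (\<Union>k\<le>n. Bf k)"
    proof clarify
      fix x
      have "FDD_coef E x k \<in> span (\<Union>k\<le>n. Bf k)" if "k \<le> n" for k
      proof -
        have "FDD_coef E x k \<in> span (Bf k)" using cP Bf by blast
        moreover have "span (Bf k) \<subseteq> span (\<Union>k\<le>n. Bf k)" using that by (intro span_mono) auto
        ultimately show ?thesis by blast
      qed
      then show "T n x \<in> span (\<Union>k\<le>n. Bf k)" unfolding Tsum by (intro span_sum) auto
    qed
  qed
  have Tcomp: "x - T n x = FDD_proj E (- {..n}) x" for n x
  proof -
    have s: "FDD_coef E x summable_on UNIV" using hs by (auto simp: summable_on_def)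
    have "x = infsum (FDD_coef E x) ({..n} \<union> - {..n})" using infsumI[OF hs[of x]] by (simp add: sup_compl_top del: Compl_atMost)
    also have "\<dots> = infsum (FDD_coef E x) {..n} + infsum (FDD_coef E x) (- {..n})"
      by (intro infsum_Un_disjoint summable_on_subset_banach[OF s]) auto
    finally show ?thesis by (simp add: T_def FDD_proj_def algebra_simps)
  qed
  have onK: "onorm (\<lambda>x. x - T n x) \<le> K'" for n
    by (rule onorm_bound[OF K'0]) (simp add: Tcomp KP')
  have ap: "\<exists>T'\<in>range T. norm (y - T' y) < e" if e0: "e > 0" for e y
  proof -
    have "(\<lambda>m. \<Sum>k<m. FDD_coef E y k) \<longlonglongrightarrow> y" using cP[of y] by (simp add: sums_def)
    then obtain N where N: "\<And>m. m \<ge> N \<Longrightarrow> norm ((\<Sum>k<m. FDD_coef E y k) - y) < e"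
      using e0 unfolding LIMSEQ_iff by blast
    have "norm (y - T N y) < e"
      using N[of "Suc N"] by (simp add: Tsum lessThan_Suc_atMost norm_minus_commute)
    then show ?thesis by blast
  qed
  show ?thesis
    by (rule part1[of "range T" K']) (use Tfr K'2 onK ap in auto)
qed


theorem mainTheorem5:
  fixes X_type :: "'a::banach itself"
  shows "(\<forall>\<A> :: ('a \<Rightarrow> 'a) set.
            (\<forall>T\<in>\<A>. finite_rank_op T)
          \<and> (\<exists>K<2. \<forall>T\<in>\<A>. onorm (\<lambda>x. x - T x) \<le> K)
          \<and> (\<forall>\<epsilon>>0. \<forall>x. \<exists>T\<in>\<A>. norm (x - T x) < \<epsilon>)
          \<longrightarrow> \<not> (\<exists>x::'a. super_delta_point x))
       \<and> (\<forall>E :: nat \<Rightarrow> 'a set.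
            unconditional_FDD E
          \<and> (\<exists>K<2. \<forall>A x. norm (FDD_proj E A x) \<le> K * norm x)
          \<longrightarrow> \<not> (\<exists>x::'a. super_delta_point x))"
proof (intro conjI allI impI notI)
  fix \<A> :: "('a \<Rightarrow> 'a) set"
  assume h: "(\<forall>T\<in>\<A>. finite_rank_op T)
          \<and> (\<exists>K<2. \<forall>T\<in>\<A>. onorm (\<lambda>x. x - T x) \<le> K)
          \<and> (\<forall>\<epsilon>>0. \<forall>x. \<exists>T\<in>\<A>. norm (x - T x) < \<epsilon>)"
    and "\<exists>x::'a. super_delta_point x"
  then obtain x :: 'a and K where "super_delta_point x" "K < 2" "\<forall>T\<in>\<A>. onorm (\<lambda>x. x - T x) \<le> K"
    by blast
  then show False using part1[of \<A> K x] h by blast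
next
  fix E :: "nat \<Rightarrow> 'a set"
  assume h: "unconditional_FDD E
          \<and> (\<exists>K<2. \<forall>A x. norm (FDD_proj E A x) \<le> K * norm x)"
    and "\<exists>x::'a. super_delta_point x"
  then obtain x :: 'a and K where "super_delta_point x" "K < 2" "\<forall>A x. norm (FDD_proj E A x) \<le> K * norm x"
    by blast
  then show False using part2[of E K x] h by blast
qed

end
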